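(* Let $I_1>0$, $\delta\in\mathbb{R}$ and let $V:\mathbb{R}\to\mathbb{R}$ be smooth (in the paper $V(s)=c_1s+c_2s^2$). On $\mathbb{R}^4\times\mathbb{R}^3\ni(\bm{x},\bm{l})$ with the Poisson structure $B_+$ (defined in the context), consider \[ H=\frac{1}{2I_1}\big(l_x^2+l_y^2+l_z^2+\delta L_3^2\big)+V(x_0^2+x_3^2-x_1^2-x_2^2), \] \[ L_3=2l_x(-x_0x_2+x_1x_3)+2l_y(x_0x_1+x_2x_3)+l_z(x_0^2+x_3^2-x_1^2-x_2^2), \] and $l_z$. Then: (i) the functions $H$, $l_z$, $L_3$ pairwise Poisson commute with respect to $B_+$; (ii) the Hamiltonian vector field of $H$ satisfies \[ X_H=\frac{1}{2I_1}X_{\bm{l}^2}+\frac{\delta L_3}{I_1}X_{L_3}-\frac12\big(0,0,0,0,\ \bm{x}_+\nabla_{\bm{x}}V\big)^t, \] where $\bm{l}^2=l_x^2+l_y^2+l_z^2$ and $\nabla_{\bm{x}}V$ denotes the gradient with respect to $\bm{x}$ of $\bm{x}\mapsto V(x_0^2+x_3^2-x_1^2-x_2^2)$; (iii) the flows of $X_{l_z}$ and $X_{L_3}$ are periodic and commute, so they generate a (singular) $T^2$-action; (iv) restricted to $M=\{(\bm{x},\bm{l}):|\bm{x}|=1\}$, the vector fields $X_H$, $X_{L_3}$, $X_{l_z}$ are linearly independent on an open dense subset of $M$.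
   Context: For $\bm{x}=(x_0,x_1,x_2,x_3)\in\mathbb{R}^4$ define the $3\times4$ matrices \[ \bm{x}_\pm=\begin{pmatrix} x_1 & -x_0 & \mp x_3 & \pm x_2\\ x_2 & \pm x_3 & -x_0 & \mp x_1\\ x_3 & \mp x_2 & \pm x_1 & -x_0\end{pmatrix}. \] For $\bm{v}\in\mathbb{R}^3$ let $\hat{\bm{v}}$ be the $3\times 3$ skew matrix with $\hat{\bm{v}}\bm{u}=\bm{v}\times\bm{u}$. The Poisson structure $B_+$ on $\mathbb{R}^4\times\mathbb{R}^3$ is given by the $7\times7$ matrix \[ B_+=\begin{pmatrix}0 & \tfrac12\bm{x}_+^t\\ -\tfrac12\bm{x}_+ & -\hat{\bm{l}}\end{pmatrix}, \] i.e. $\{F,G\}=\nabla F^t B_+\nabla G$, and the Hamiltonian vector field of $F$ is $X_F=B_+\nabla F$, so that $\dot{\bm{x}}=\tfrac12\bm{x}_+^t\nabla_{\bm{l}}F$, $\dot{\bm{l}}=-\tfrac12\bm{x}_+\nabla_{\bm{x}}F-\bm{l}\times\nabla_{\bm{l}}F$. The function $|\bm{x}|^2$ is a Casimir. On $|\bm{x}|=1$, $R=\bm{x}_+\bm{x}_-^t\in SO(3)$ and $L_3=\bm{l}\cdot R\bm{e}_3$ with $\bm{e}_3=(0,0,1)^t$. *)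

theory Defs
  imports "HOL-Analysis.Analysis"
begin

text \<open>Phase space R^4 x R^3. A point is z = (x, l) with x = (x$0, x$1, x$2, x$3)
  and l = (l$1, l$2, l$3) = (l_x, l_y, l_z).\<close>

type_synonym state = "(real^4) \<times> (real^3)"

definition vec4 :: "real \<Rightarrow> real \<Rightarrow> real \<Rightarrow> real \<Rightarrow> real^4" where
  "vec4 a b c d = (\<chi> j. if j = 0 then a else if j = 1 then b else if j = 2 then c else d)"

definition vec3 :: "'a \<Rightarrow> 'a \<Rightarrow> 'a \<Rightarrow> 'a^3" where
  "vec3 a b c = (\<chi> i. if i = 1 then a else if i = 2 then b else c)"

definition xplus :: "real^4 \<Rightarrow> real^4^3" where
  "xplus x = vec3 (vec4 (x$1) (-(x$0)) (-(x$3)) (x$2))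
                  (vec4 (x$2) (x$3) (-(x$0)) (-(x$1)))
                  (vec4 (x$3) (-(x$2)) (x$1) (-(x$0)))"

definition xminus :: "real^4 \<Rightarrow> real^4^3" where
  "xminus x = vec3 (vec4 (x$1) (-(x$0)) (x$3) (-(x$2)))
                   (vec4 (x$2) (-(x$3)) (-(x$0)) (x$1))
                   (vec4 (x$3) (x$2) (-(x$1)) (-(x$0)))"

definition grad :: "(state \<Rightarrow> real) \<Rightarrow> state \<Rightarrow> state" where
  "grad F z = ((\<chi> i. frechet_derivative F (at z) (axis i 1, 0)),
               (\<chi> j. frechet_derivative F (at z) (0, axis j 1)))"

text \<open>Hamiltonian vector field X_F = B_+ grad F.\<close>
definition hvf :: "(state \<Rightarrow> real) \<Rightarrow> state \<Rightarrow> state" where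
  "hvf F z = ((1/2) *\<^sub>R (transpose (xplus (fst z)) *v snd (grad F z)),
              - ((1/2) *\<^sub>R (xplus (fst z) *v fst (grad F z))) - cross3 (snd z) (snd (grad F z)))"

definition poisson :: "(state \<Rightarrow> real) \<Rightarrow> (state \<Rightarrow> real) \<Rightarrow> state \<Rightarrow> real" where
  "poisson F G z = grad F z \<bullet> hvf G z"

definition quadq :: "real^4 \<Rightarrow> real" where
  "quadq x = (x$0)^2 + (x$3)^2 - (x$1)^2 - (x$2)^2"

definition L3 :: "state \<Rightarrow> real" where
  "L3 z = (let x = fst z; l = snd z in
      2 * l$1 * (-(x$0) * x$2 + x$1 * x$3) + 2 * l$2 * (x$0 * x$1 + x$2 * x$3)
      + l$3 * quadq x)"

definition lz :: "state \<Rightarrow> real" where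
  "lz z = snd z $ 3"

definition lsq :: "state \<Rightarrow> real" where
  "lsq z = (snd z $ 1)^2 + (snd z $ 2)^2 + (snd z $ 3)^2"

definition Ham :: "real \<Rightarrow> real \<Rightarrow> (real \<Rightarrow> real) \<Rightarrow> state \<Rightarrow> real" where
  "Ham I1 \<delta> V z = 1 / (2 * I1) * (lsq z + \<delta> * (L3 z)^2) + V (quadq (fst z))"

definition is_flow :: "(state \<Rightarrow> state) \<Rightarrow> (real \<Rightarrow> state \<Rightarrow> state) \<Rightarrow> bool" where
  "is_flow X \<phi> \<longleftrightarrow> (\<forall>z. \<phi> 0 z = z \<and>
      (\<forall>t. ((\<lambda>s. \<phi> s z) has_vector_derivative X (\<phi> t z)) (at t)))"

definition Mset :: "state set" where
  "Mset = {z. norm (fst z) = 1}"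

definition smooth_real :: "(real \<Rightarrow> real) \<Rightarrow> bool" where
  "smooth_real V \<longleftrightarrow> (\<forall>n s. ((deriv ^^ n) V) differentiable (at s))"

end

theory Submission
  imports Defs
begin


lemma four_eq0: "(4::4) = 0" by simp
lemma forall4: "(\<forall>i::4. P i) \<longleftrightarrow> P 0 \<and> P 1 \<and> P 2 \<and> P 3"
  using forall_4[of P] by (auto simp add: four_eq0)
lemma sum4: "sum f (UNIV::4 set) = f 0 + f 1 + f 2 + f 3"
  using sum_4[of f] by (simp add: four_eq0 algebra_simps)

lemma vec4_nth[simp]: "vec4 a b c d $ 0 = a" "vec4 a b c d $ 1 = b" "vec4 a b c d $ 2 = c" "vec4 a b c d $ 3 = d"
  by (simp_all add: vec4_def)
lemma vec3_nth[simp]: "vec3 a b c $ 1 = a" "vec3 a b c $ 2 = b" "vec3 a b c $ 3 = c"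
  by (simp_all add: vec3_def)

lemma vec4_eq_iff: "(v::real^4) = w \<longleftrightarrow> v$0 = w$0 \<and> v$1 = w$1 \<and> v$2 = w$2 \<and> v$3 = w$3"
  by (simp add: vec_eq_iff forall4)
lemma vec3_eq_iff: "(v::real^3) = w \<longleftrightarrow> v$1 = w$1 \<and> v$2 = w$2 \<and> v$3 = w$3"
  by (simp add: vec_eq_iff forall_3)

lemma inner4: "(v::real^4) \<bullet> w = v$0*w$0 + v$1*w$1 + v$2*w$2 + v$3*w$3"
  by (simp add: inner_vec_def sum4)
lemma inner3: "(v::real^3) \<bullet> w = v$1*w$1 + v$2*w$2 + v$3*w$3"
  by (simp add: inner_vec_def sum_3)

lemma xplus_mv_nth[simp]:
  "(xplus x *v u) $ 1 = x$1* u$0 - x$0* u$1 - x$3* u$2 + x$2* u$3"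
  "(xplus x *v u) $ 2 = x$2* u$0 + x$3* u$1 - x$0* u$2 - x$1* u$3"
  "(xplus x *v u) $ 3 = x$3* u$0 - x$2* u$1 + x$1* u$2 - x$0* u$3"
  by (simp_all add: xplus_def matrix_vector_mult_def sum4)

lemma xplusT_mv_nth[simp]:
  "(transpose (xplus x) *v w) $ 0 = x$1*w$1 + x$2*w$2 + x$3*w$3"
  "(transpose (xplus x) *v w) $ 1 = -x$0*w$1 + x$3*w$2 - x$2*w$3"
  "(transpose (xplus x) *v w) $ 2 = -x$3*w$1 - x$0*w$2 + x$1*w$3"
  "(transpose (xplus x) *v w) $ 3 = x$2*w$1 - x$1*w$2 - x$0*w$3"
  by (simp_all add: xplus_def matrix_vector_mult_def transpose_def sum_3)

lemma xplus_vm_nth[simp]: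
  "(w v* xplus x) $ 0 = x$1*w$1 + x$2*w$2 + x$3*w$3"
  "(w v* xplus x) $ 1 = -x$0*w$1 + x$3*w$2 - x$2*w$3"
  "(w v* xplus x) $ 2 = -x$3*w$1 - x$0*w$2 + x$1*w$3"
  "(w v* xplus x) $ 3 = x$2*w$1 - x$1*w$2 - x$0*w$3"
  by (simp_all add: xplus_def vector_matrix_mult_def sum_3)

lemma cross3_nth[simp]:
  "cross3 a b $ 1 = a$2 * b$3 - a$3 * b$2"
  "cross3 a b $ 2 = a$3 * b$1 - a$1 * b$3"
  "cross3 a b $ 3 = a$1 * b$2 - a$2 * b$1"
  by (simp_all add: cross3_def vector_def)


lemma hd_xc: "((\<lambda>w::state. fst w $ i) has_derivative (\<lambda>h. fst h $ i)) F"
  by (rule bounded_linear_imp_has_derivative, rule bounded_linear_compose[OF bounded_linear_vec_nth bounded_linear_fst])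
lemma hd_lc: "((\<lambda>w::state. snd w $ i) has_derivative (\<lambda>h. snd h $ i)) F"
  by (rule bounded_linear_imp_has_derivative, rule bounded_linear_compose[OF bounded_linear_vec_nth bounded_linear_snd])

lemma grad_inner:
  assumes "(F has_derivative (\<lambda>h. gx \<bullet> fst h + gl \<bullet> snd h)) (at z)"
  shows "grad F z = (gx, gl)"
  using frechet_derivative_at[OF assms, symmetric]
  by (simp add: grad_def vec_eq_iff inner_axis)

definition gq :: "real^4 \<Rightarrow> real^4" where
  "gq x = vec4 (2*x$0) (-2*x$1) (-2*x$2) (2*x$3)"
definition nvec :: "real^4 \<Rightarrow> real^3" where
  "nvec x = vec3 (2*(x$1*x$3 - x$0*x$2)) (2*(x$0*x$1 + x$2*x$3)) (quadq x)"
definition gL3x :: "state \<Rightarrow> real^4" where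
  "gL3x z = (let x = fst z; l = snd z in
     vec4 (-2*l$1*x$2 + 2*l$2*x$1 + 2*l$3*x$0) (2*l$1*x$3 + 2*l$2*x$0 - 2*l$3*x$1)
          (-2*l$1*x$0 + 2*l$2*x$3 - 2*l$3*x$2) (2*l$1*x$1 + 2*l$2*x$2 + 2*l$3*x$3))"

lemma hd_lz: "(lz has_derivative (\<lambda>h. 0 \<bullet> fst h + vec3 0 0 1 \<bullet> snd h)) (at z)"
  unfolding lz_def
  by (rule has_derivative_eq_rhs[OF hd_lc]) (simp add: inner3)

lemma hd_lsq: "(lsq has_derivative (\<lambda>h. 0 \<bullet> fst h + (2 *\<^sub>R snd z) \<bullet> snd h)) (at z)"
  unfolding lsq_def
  apply (rule has_derivative_eq_rhs)
   apply (rule hd_lc hd_xc has_derivative_add has_derivative_diff has_derivative_mult has_derivative_minus has_derivative_power has_derivative_const)+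
  apply (simp add: inner3 fun_eq_iff algebra_simps)
  done

lemma hd_q: "((\<lambda>w::state. quadq (fst w)) has_derivative (\<lambda>h. gq (fst z) \<bullet> fst h + 0 \<bullet> snd h)) (at z)"
  unfolding quadq_def
  apply (rule has_derivative_eq_rhs)
   apply (rule hd_lc hd_xc has_derivative_add has_derivative_diff has_derivative_mult has_derivative_minus has_derivative_power has_derivative_const)+
  apply (rule ext)
  apply (simp add: inner4 inner3 gq_def)
  done

lemma hd_L3: "(L3 has_derivative (\<lambda>h. gL3x z \<bullet> fst h + nvec (fst z) \<bullet> snd h)) (at z)"
  unfolding L3_def quadq_def Let_def
  apply (rule has_derivative_eq_rhs)
   apply (rule hd_lc hd_xc has_derivative_add has_derivative_diff has_derivative_mult has_derivative_minus has_derivative_power has_derivative_const)+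
  apply (rule ext)
  apply (simp add: inner4 inner3 gL3x_def nvec_def quadq_def Let_def)
  apply (algebra)?
  done





lemma hd_VQ:
  assumes "\<And>s. V differentiable (at s)"
  shows "((\<lambda>w::state. V (quadq (fst w))) has_derivative
           (\<lambda>h. (deriv V (quadq (fst z)) *\<^sub>R gq (fst z)) \<bullet> fst h + 0 \<bullet> snd h)) (at z)"
proof -
  have "DERIV V (quadq (fst z)) :> deriv V (quadq (fst z))"
    using assms[of "quadq (fst z)"] by (simp only: DERIV_deriv_iff_real_differentiable)
  hence dV: "(V has_derivative (\<lambda>x. deriv V (quadq (fst z)) * x)) (at (quadq (fst z)))"
    by (simp add: has_field_derivative_def)
  show ?thesis
    apply (rule has_derivative_eq_rhs)
     apply (rule has_derivative_compose[OF hd_q dV])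
    apply (rule ext) apply (simp only: inner_scaleR_left inner_zero_left add_0_right)
    done
qed

lemma grad_lz: "grad lz z = (0, vec3 0 0 1)" by (rule grad_inner[OF hd_lz])
lemma grad_lsq: "grad lsq z = (0, 2 *\<^sub>R snd z)" by (rule grad_inner[OF hd_lsq])
lemma grad_L3: "grad L3 z = (gL3x z, nvec (fst z))" by (rule grad_inner[OF hd_L3])
lemma grad_VQ: "(\<And>s. V differentiable (at s)) \<Longrightarrow>
   grad (\<lambda>w. V (quadq (fst w))) z = (deriv V (quadq (fst z)) *\<^sub>R gq (fst z), 0)"
  by (rule grad_inner[OF hd_VQ])

lemma grad_H:
  assumes "\<And>s. V differentiable (at s)"
  shows "grad (Ham I1 \<delta> V) z =
     ((\<delta> * L3 z / I1) *\<^sub>R gL3x z + deriv V (quadq (fst z)) *\<^sub>R gq (fst z),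
      (1 / I1) *\<^sub>R snd z + (\<delta> * L3 z / I1) *\<^sub>R nvec (fst z))"
proof -
  have "(Ham I1 \<delta> V has_derivative (\<lambda>h. ((\<delta> * L3 z / I1) *\<^sub>R gL3x z + deriv V (quadq (fst z)) *\<^sub>R gq (fst z)) \<bullet> fst h
         + ((1 / I1) *\<^sub>R snd z + (\<delta> * L3 z / I1) *\<^sub>R nvec (fst z)) \<bullet> snd h)) (at z)"
    unfolding Ham_def[abs_def]
    apply (rule has_derivative_eq_rhs)
     apply (rule has_derivative_add has_derivative_mult has_derivative_power has_derivative_const hd_lsq hd_L3 hd_VQ[OF assms])+
    apply (rule ext)
    apply (simp add: inner_add_left)
    apply (cases "I1 = 0")
     apply simp
    apply (simp add: field_simps)
    done
  thus ?thesis by (rule grad_inner)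
qed

lemma hvf_grad: "grad F z = (gx, gl) \<Longrightarrow>
  hvf F z = ((1/2) *\<^sub>R (transpose (xplus (fst z)) *v gl), - ((1/2) *\<^sub>R (xplus (fst z) *v gx)) - cross3 (snd z) gl)"
  by (simp add: hvf_def)


definition Jx :: "real^4 \<Rightarrow> real^4" where "Jx x = vec4 (x$3) (x$2) (-x$1) (-x$0)"
definition Kx :: "real^4 \<Rightarrow> real^4" where "Kx x = vec4 (x$3) (-x$2) (x$1) (-x$0)"

lemma Jx_nth[simp]: "Jx x $ 0 = x$3" "Jx x $ 1 = x$2" "Jx x $ 2 = -x$1" "Jx x $ 3 = -x$0"
  by (simp_all add: Jx_def)
lemma Kx_nth[simp]: "Kx x $ 0 = x$3" "Kx x $ 1 = -x$2" "Kx x $ 2 = x$1" "Kx x $ 3 = -x$0"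
  by (simp_all add: Kx_def)

lemma hvf_lz: "hvf lz z = ((1/2) *\<^sub>R Kx (fst z), vec3 (- snd z $ 2) (snd z $ 1) 0)"
  by (simp add: hvf_grad[OF grad_lz] vec4_eq_iff vec3_eq_iff)

lemma hvf_lsq: "hvf lsq z = (transpose (xplus (fst z)) *v snd z, 0)"
  by (simp add: hvf_grad[OF grad_lsq] vec4_eq_iff vec3_eq_iff)

lemma hvf_L3: "hvf L3 z = (((fst z \<bullet> fst z)/2) *\<^sub>R Jx (fst z), 0)"
  by (simp add: hvf_grad[OF grad_L3] vec4_eq_iff vec3_eq_iff inner4 gL3x_def nvec_def quadq_def Let_def; algebra)

lemma hvf_VQ: "(\<And>s. V differentiable (at s)) \<Longrightarrow>
  hvf (\<lambda>w. V (quadq (fst w))) z = (0, - ((1/2) *\<^sub>R (xplus (fst z) *v (deriv V (quadq (fst z)) *\<^sub>R gq (fst z)))))"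
  by (simp add: hvf_grad[OF grad_VQ])

lemma hvf_H: "(\<And>s. V differentiable (at s)) \<Longrightarrow> I1 \<noteq> 0 \<Longrightarrow>
  hvf (Ham I1 \<delta> V) z = (1 / (2 * I1)) *\<^sub>R hvf lsq z + (\<delta> * L3 z / I1) *\<^sub>R hvf L3 z
          - (1/2) *\<^sub>R (0, xplus (fst z) *v fst (grad (\<lambda>w. V (quadq (fst w))) z))"
  apply (simp add: hvf_grad[OF grad_H] grad_VQ hvf_grad[OF grad_lsq] hvf_grad[OF grad_L3])
  apply (simp add: vec4_eq_iff vec3_eq_iff gL3x_def Let_def nvec_def)
  apply (simp add: field_simps)
  done

lemma pb_H_lz: assumes d: "\<And>s. V differentiable (at s)" shows "poisson (Ham I1 \<delta> V) lz z = 0"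
  by (simp add: poisson_def hvf_lz grad_H[OF d] inner4 inner3 gL3x_def Let_def nvec_def gq_def quadq_def; algebra)

lemma pb_H_L3: assumes d: "\<And>s. V differentiable (at s)" shows "poisson (Ham I1 \<delta> V) L3 z = 0"
  by (simp add: poisson_def hvf_L3 grad_H[OF d] inner4 inner3 gL3x_def Let_def nvec_def gq_def quadq_def; algebra)

lemma pb_lz_L3: "poisson lz L3 z = 0"
  by (simp add: poisson_def hvf_L3 grad_lz)




definition Al :: "real^3 \<Rightarrow> real^3" where "Al l = vec3 (l$1) (l$2) 0"
definition Bl :: "real^3 \<Rightarrow> real^3" where "Bl l = vec3 (-l$2) (l$1) 0"
definition Cl :: "real^3 \<Rightarrow> real^3" where "Cl l = vec3 0 0 (l$3)"

definition phi :: "real \<Rightarrow> state \<Rightarrow> state" where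
  "phi s z = (cos (s/2) *\<^sub>R fst z + sin (s/2) *\<^sub>R Kx (fst z),
              cos s *\<^sub>R Al (snd z) + sin s *\<^sub>R Bl (snd z) + Cl (snd z))"

definition psi :: "real \<Rightarrow> state \<Rightarrow> state" where
  "psi t z = (cos ((fst z \<bullet> fst z) * t / 2) *\<^sub>R fst z + sin ((fst z \<bullet> fst z) * t / 2) *\<^sub>R Jx (fst z), snd z)"

lemma phi_flow: "is_flow (hvf lz) phi"
  unfolding is_flow_def
proof (intro allI conjI)
  fix z :: state and t :: real
  show "phi 0 z = z"
    by (simp add: phi_def Al_def Cl_def prod_eq_iff vec3_eq_iff)
  have c1: "((\<lambda>s. cos (s/2)) has_field_derivative (- sin (t/2) / 2)) (at t)"
    by (auto intro!: derivative_eq_intros)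
  have s1: "((\<lambda>s. sin (s/2)) has_field_derivative (cos (t/2) / 2)) (at t)"
    by (auto intro!: derivative_eq_intros)
  have c2: "((\<lambda>s. cos s) has_field_derivative (- sin t)) (at t)"
    by (auto intro!: derivative_eq_intros)
  have s2: "((\<lambda>s. sin s) has_field_derivative (cos t)) (at t)"
    by (auto intro!: derivative_eq_intros)
  show "((\<lambda>s. phi s z) has_vector_derivative hvf lz (phi t z)) (at t)"
    unfolding phi_def
    apply (rule has_vector_derivative_eq_rhs)
     apply ((rule has_vector_derivative_Pair has_vector_derivative_add
        has_vector_derivative_scaleR[OF c1] has_vector_derivative_scaleR[OF s1]
        has_vector_derivative_scaleR[OF c2] has_vector_derivative_scaleR[OF s2] has_vector_derivative_const)+)[1]
    apply (simp add: hvf_lz phi_def prod_eq_iff vec4_eq_iff vec3_eq_iff Al_def Bl_def Cl_def)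
    done
qed


lemma rot_norm: "(c *\<^sub>R u + s *\<^sub>R Jx u) \<bullet> (c *\<^sub>R u + s *\<^sub>R Jx u) = (c^2 + s^2) * (u \<bullet> u)"
  by (simp add: inner4 power2_eq_square algebra_simps)

lemma rotK_norm: "(c *\<^sub>R u + s *\<^sub>R Kx u) \<bullet> (c *\<^sub>R u + s *\<^sub>R Kx u) = (c^2 + s^2) * (u \<bullet> u)"
  by (simp add: inner4 power2_eq_square algebra_simps)

lemma psi_norm: "fst (psi t z) \<bullet> fst (psi t z) = fst z \<bullet> fst z"
  unfolding psi_def fst_conv rot_norm by simp

lemma psi_flow: "is_flow (hvf L3) psi"
  unfolding is_flow_def
proof (intro allI conjI)
  fix z :: state and t :: real
  show "psi 0 z = z"
    by (simp add: psi_def)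
  define r where "r = fst z \<bullet> fst z"
  have c1: "((\<lambda>s. cos (r * s/2)) has_field_derivative (- sin (r * t/2) * (r/2))) (at t)"
    by (auto intro!: derivative_eq_intros)
  have s1: "((\<lambda>s. sin (r * s/2)) has_field_derivative (cos (r * t/2) * (r/2))) (at t)"
    by (auto intro!: derivative_eq_intros)
  have hv: "hvf L3 (psi t z) = ((r/2) *\<^sub>R Jx (fst (psi t z)), 0)"
    by (simp add: hvf_L3 psi_norm r_def)
  show "((\<lambda>s. psi s z) has_vector_derivative hvf L3 (psi t z)) (at t)"
    unfolding hv unfolding psi_def r_def[symmetric]
    apply (rule has_vector_derivative_eq_rhs)
     apply ((rule has_vector_derivative_Pair has_vector_derivative_add
        has_vector_derivative_scaleR[OF c1] has_vector_derivative_scaleR[OF s1] has_vector_derivative_const)+)[1]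
    apply (simp add: prod_eq_iff vec4_eq_iff)
    apply (simp add: algebra_simps)?
    done
qed

lemma phi_norm: "fst (phi s z) \<bullet> fst (phi s z) = fst z \<bullet> fst z"
  unfolding phi_def fst_conv rotK_norm by simp

lemma Kx_lin: "Kx (a *\<^sub>R u + b *\<^sub>R v) = a *\<^sub>R Kx u + b *\<^sub>R Kx v"
  by (simp add: vec4_eq_iff algebra_simps)
lemma Jx_lin: "Jx (a *\<^sub>R u + b *\<^sub>R v) = a *\<^sub>R Jx u + b *\<^sub>R Jx v"
  by (simp add: vec4_eq_iff algebra_simps)
lemma JK: "Jx (Kx x) = Kx (Jx x)"
  by (simp add: vec4_eq_iff)

lemma phi_psi_comm: "phi s (psi t z) = psi t (phi s z)"
proof -
  have n: "fst (phi s z) \<bullet> fst (phi s z) = fst z \<bullet> fst z" by (rule phi_norm)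
  have "fst (phi s (psi t z)) = fst (psi t (phi s z))"
    unfolding psi_def[of t "phi s z"] n
    apply (simp add: phi_def psi_def Kx_lin Jx_lin JK)
    apply (simp add: algebra_simps)
    done
  moreover have "snd (phi s (psi t z)) = snd (psi t (phi s z))"
    by (simp add: phi_def psi_def)
  ultimately show ?thesis by (simp add: prod_eq_iff)
qed




definition Dfun :: "state \<Rightarrow> real" where
  "Dfun z = snd z $ 2 * nvec (fst z) $ 1 - snd z $ 1 * nvec (fst z) $ 2"

lemma indep_core:
  assumes xx: "x \<bullet> x = 1" and D: "l$2 * nvec x $ 1 - l$1 * nvec x $ 2 \<noteq> 0"
    and eq: "A *\<^sub>R (transpose (xplus x) *v l) + B *\<^sub>R (transpose (xplus x) *v nvec x) + Bb *\<^sub>R Jx x + Cc *\<^sub>R Kx x = 0"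
  shows "A = 0 \<and> B + Bb = 0 \<and> Cc = 0"
proof -
  from eq have E: "A * (x$1*l$1 + x$2*l$2 + x$3*l$3) + B * (x$1*nvec x$1 + x$2*nvec x$2 + x$3*nvec x$3) + Bb * x$3 + Cc * x$3 = 0"
     "A * (-x$0*l$1 + x$3*l$2 - x$2*l$3) + B * (-x$0*nvec x$1 + x$3*nvec x$2 - x$2*nvec x$3) + Bb * x$2 - Cc * x$2 = 0"
     "A * (-x$3*l$1 - x$0*l$2 + x$1*l$3) + B * (-x$3*nvec x$1 - x$0*nvec x$2 + x$1*nvec x$3) - Bb * x$1 + Cc * x$1 = 0"
     "A * (x$2*l$1 - x$1*l$2 - x$0*l$3) + B * (x$2*nvec x$1 - x$1*nvec x$2 - x$0*nvec x$3) - Bb * x$0 - Cc * x$0 = 0"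
    by (simp_all add: vec4_eq_iff algebra_simps)
  have x1: "(x$0)^2 + (x$1)^2 + (x$2)^2 + (x$3)^2 = 1" using xx by (simp add: inner4 power2_eq_square)
  have n: "nvec x $ 1 = 2*(x$1*x$3 - x$0*x$2)" "nvec x $ 2 = 2*(x$0*x$1 + x$2*x$3)"
      "nvec x $ 3 = (x$0)^2 + (x$3)^2 - (x$1)^2 - (x$2)^2"
    by (simp_all add: nvec_def quadq_def)
  have C1: "A * l$1 + (B + Bb) * nvec x $ 1 = 0"
    using E x1 unfolding n by algebra
  have C2: "A * l$2 + (B + Bb) * nvec x $ 2 = 0"
    using E x1 unfolding n by algebra
  have C3: "A * l$3 + (B + Bb) * nvec x $ 3 + Cc = 0"
    using E x1 unfolding n by algebra
  have "A * (l$2 * nvec x $ 1 - l$1 * nvec x $ 2) = 0"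
    using C1 C2 by algebra
  hence A: "A = 0" using D by simp
  have "(B + Bb) * (l$2 * nvec x $ 1 - l$1 * nvec x $ 2) = 0"
    using C1 C2 A by algebra
  hence B: "B + Bb = 0" using D by simp
  show ?thesis using A B C3 by simp
qed


lemma Mset_xx: "z \<in> Mset \<Longrightarrow> fst z \<bullet> fst z = 1"
  by (simp add: Mset_def norm_eq_1)

lemma indep:
  assumes d: "\<And>s. V differentiable (at s)" and I: "I1 > 0" and z: "z \<in> Mset" and D: "Dfun z \<noteq> 0"
    and eq: "a *\<^sub>R hvf (Ham I1 \<delta> V) z + b *\<^sub>R hvf L3 z + c *\<^sub>R hvf lz z = 0"
  shows "a = 0 \<and> b = 0 \<and> c = 0"
proof -
  define x where "x = fst z"
  define l where "l = snd z"
  have xx: "x \<bullet> x = 1" using Mset_xx[OF z] by (simp add: x_def)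
  have f0: "fst (a *\<^sub>R hvf (Ham I1 \<delta> V) z + b *\<^sub>R hvf L3 z + c *\<^sub>R hvf lz z) = 0"
    using eq by simp
  have "fst (a *\<^sub>R hvf (Ham I1 \<delta> V) z + b *\<^sub>R hvf L3 z + c *\<^sub>R hvf lz z) =
     (a/(2*I1)) *\<^sub>R (transpose (xplus x) *v l) + (a*\<delta>*L3 z/(2*I1)) *\<^sub>R (transpose (xplus x) *v nvec x)
      + (b/2) *\<^sub>R Jx x + (c/2) *\<^sub>R Kx x"
    using I xx
    by (simp add: hvf_grad[OF grad_H[OF d]] hvf_L3 hvf_lz x_def l_def vec4_eq_iff field_simps)
  with f0 have F: "(a/(2*I1)) *\<^sub>R (transpose (xplus x) *v l) + (a*\<delta>*L3 z/(2*I1)) *\<^sub>R (transpose (xplus x) *v nvec x)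
      + (b/2) *\<^sub>R Jx x + (c/2) *\<^sub>R Kx x = 0" by simp
  have D': "l$2 * nvec x $ 1 - l$1 * nvec x $ 2 \<noteq> 0" using D by (simp add: Dfun_def x_def l_def)
  from indep_core[OF xx D' F] I show ?thesis by auto
qed




lemma cont_xc: "continuous_on S (\<lambda>z::state. fst z $ i)"
  by (rule linear_continuous_on, rule bounded_linear_compose[OF bounded_linear_vec_nth bounded_linear_fst])
lemma cont_lc: "continuous_on S (\<lambda>z::state. snd z $ i)"
  by (rule linear_continuous_on, rule bounded_linear_compose[OF bounded_linear_vec_nth bounded_linear_snd])

lemma open_D: "open {z. Dfun z \<noteq> 0}"
proof -
  have "continuous_on UNIV Dfun"
    unfolding Dfun_def nvec_def
    by (simp, intro continuous_intros cont_xc cont_lc)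
  thus ?thesis using open_Collect_neq[of Dfun "\<lambda>_. 0"] by simp
qed

definition Px :: "real^4 \<Rightarrow> real^4" where "Px x = vec4 (-x$1) (x$0) (x$3) (-x$2)"

lemma Px_nth[simp]: "Px x $ 0 = -x$1" "Px x $ 1 = x$0" "Px x $ 2 = x$3" "Px x $ 3 = -x$2"
  by (simp_all add: Px_def)

lemma rotP_norm: "(c *\<^sub>R u + s *\<^sub>R Px u) \<bullet> (c *\<^sub>R u + s *\<^sub>R Px u) = (c^2 + s^2) * (u \<bullet> u)"
  by (simp add: inner4 power2_eq_square algebra_simps)

lemma nvec_sq: "(nvec x$1)^2 + (nvec x$2)^2 + (nvec x$3)^2 = (x \<bullet> x)^2"
  by (simp add: nvec_def quadq_def inner4 power2_eq_square algebra_simps)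

lemma quadq_rot: "nvec (c *\<^sub>R x + s *\<^sub>R Px x) $ 3 = (c^2 - s^2) * nvec x $ 3 - 2 * c * s * (nvec x $ 2)"
  by (simp add: nvec_def quadq_def power2_eq_square algebra_simps)

lemma t3: fixes x :: "real^4" and l w :: "real^3"
  assumes "w = vec3 (- nvec x $ 2) (nvec x $ 1) 0"
  shows "Dfun (x, l + t *\<^sub>R w) = Dfun (x,l) + t * ((nvec x $ 1)^2 + (nvec x $ 2)^2)"
  using assms by (simp add: Dfun_def power2_eq_square algebra_simps)
lemma t4: fixes z :: state
  assumes "z \<in> {z \<in> Mset. (nvec (fst z) $ 1)^2 + (nvec (fst z) $ 2)^2 \<noteq> 0}"
  shows "(nvec (fst z) $ 1)^2 + (nvec (fst z) $ 2)^2 > 0"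
  using assms by (simp add: add_pos_pos sum_power2_gt_zero_iff)

lemma t5: fixes x :: "real^4" and l w :: "real^3"
  shows "(\<lambda>n. (x, l + inverse (real (Suc n)) *\<^sub>R w)) \<longlonglongrightarrow> (x, l)"
proof -
  have "(\<lambda>n. (x, l + inverse (real (Suc n)) *\<^sub>R w)) \<longlonglongrightarrow> (x, l + 0 *\<^sub>R w)"
    by (intro tendsto_Pair tendsto_const tendsto_add tendsto_scaleR LIMSEQ_inverse_real_of_nat)
  thus ?thesis by simp
qed

lemma M1_closure: "{z \<in> Mset. (nvec (fst z) $ 1)^2 + (nvec (fst z) $ 2)^2 \<noteq> 0} \<subseteq> closure (Mset \<inter> {z. Dfun z \<noteq> 0})"
proof
  fix z :: state assume zM: "z \<in> {z \<in> Mset. (nvec (fst z) $ 1)^2 + (nvec (fst z) $ 2)^2 \<noteq> 0}"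
  obtain x l where zxl: "z = (x, l)" by (cases z)
  show "z \<in> closure (Mset \<inter> {z. Dfun z \<noteq> 0})"
  proof (cases "Dfun z = 0")
    case False
    hence "z \<in> Mset \<inter> {z. Dfun z \<noteq> 0}" using zM by simp
    thus ?thesis using closure_subset by (rule rev_subsetD)
  next
    case D0: True
    let ?w = "vec3 (- nvec x $ 2) (nvec x $ 1) 0"
    have pos: "(nvec x $ 1)^2 + (nvec x $ 2)^2 > 0" using t4[OF zM] zxl by simp
    have xM: "(x, l') \<in> Mset" for l' using zM zxl by (simp add: Mset_def)
    have "\<forall>n. (x, l + inverse (real (Suc n)) *\<^sub>R ?w) \<in> Mset \<inter> {z. Dfun z \<noteq> 0}"
    proof
      fix n
      have "Dfun (x, l + inverse (real (Suc n)) *\<^sub>R ?w) = Dfun (x,l) + inverse (real (Suc n)) * ((nvec x $ 1)^2 + (nvec x $ 2)^2)"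
        by (rule t3) simp
      moreover have "Dfun (x,l) = 0" using D0 zxl by simp
      moreover have "inverse (real (Suc n)) * ((nvec x $ 1)^2 + (nvec x $ 2)^2) > 0"
        by (intro mult_pos_pos pos) simp
      ultimately have "Dfun (x, l + inverse (real (Suc n)) *\<^sub>R ?w) \<noteq> 0" by linarith
      thus "(x, l + inverse (real (Suc n)) *\<^sub>R ?w) \<in> Mset \<inter> {z. Dfun z \<noteq> 0}" using xM by simp
    qed
    moreover have "(\<lambda>n. (x, l + inverse (real (Suc n)) *\<^sub>R ?w)) \<longlonglongrightarrow> z"
      using t5 zxl by simp
    ultimately show ?thesis unfolding closure_sequential by (intro exI[of _ "\<lambda>n. (x, l + inverse (real (Suc n)) *\<^sub>R ?w)"] conjI)
  qed
qed

lemma t6: fixes x :: "real^4" and l :: "real^3"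
  shows "(\<lambda>n. (cos (inverse (real (Suc n))) *\<^sub>R x + sin (inverse (real (Suc n))) *\<^sub>R Px x, l)) \<longlonglongrightarrow> (x, l)"
proof -
  have "(\<lambda>n. (cos (inverse (real (Suc n))) *\<^sub>R x + sin (inverse (real (Suc n))) *\<^sub>R Px x, l)) \<longlonglongrightarrow> (cos 0 *\<^sub>R x + sin 0 *\<^sub>R Px x, l)"
    by (intro tendsto_Pair tendsto_const tendsto_add tendsto_scaleR tendsto_cos tendsto_sin LIMSEQ_inverse_real_of_nat)
  thus ?thesis by simp
qed

lemma t7: fixes \<theta> :: real assumes "0 < \<theta>" "\<theta> \<le> 1"
  shows "((cos \<theta>)^2 - (sin \<theta>)^2)^2 < 1"
proof -
  have "0 < 2*\<theta>" "2*\<theta> < pi" using assms pi_gt3 by linarith+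
  hence s: "sin (2*\<theta>) > 0" by (rule sin_gt_zero)
  have "(sin (2*\<theta>))^2 + (cos (2*\<theta>))^2 = 1" by simp
  moreover have "(sin (2*\<theta>))^2 > 0" using s by simp
  ultimately have "(cos (2*\<theta>))^2 < 1" by linarith
  thus ?thesis by (simp add: cos_double)
qed

lemma M_closure: "Mset \<subseteq> closure {z \<in> Mset. (nvec (fst z) $ 1)^2 + (nvec (fst z) $ 2)^2 \<noteq> 0}"
proof
  fix z :: state assume zM: "z \<in> Mset"
  obtain x l where zxl: "z = (x, l)" by (cases z)
  have xx: "x \<bullet> x = 1" using Mset_xx[OF zM] zxl by simp
  show "z \<in> closure {z \<in> Mset. (nvec (fst z) $ 1)^2 + (nvec (fst z) $ 2)^2 \<noteq> 0}"
  proof (cases "(nvec x $ 1)^2 + (nvec x $ 2)^2 = 0")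
    case False
    hence "z \<in> {z \<in> Mset. (nvec (fst z) $ 1)^2 + (nvec (fst z) $ 2)^2 \<noteq> 0}" using zM zxl by simp
    thus ?thesis using closure_subset by (rule rev_subsetD)
  next
    case True
    hence n12: "nvec x $ 1 = 0" "nvec x $ 2 = 0" by (simp_all add: sum_power2_eq_zero_iff)
    have n3: "(nvec x $ 3)^2 = 1" using nvec_sq[of x] xx n12 by simp
    have mem: "(cos (inverse (real (Suc n))) *\<^sub>R x + sin (inverse (real (Suc n))) *\<^sub>R Px x, l)
           \<in> {z \<in> Mset. (nvec (fst z) $ 1)^2 + (nvec (fst z) $ 2)^2 \<noteq> 0}" for n
    proof -
      define th where "th = inverse (real (Suc n))"
      define y where "y = cos th *\<^sub>R x + sin th *\<^sub>R Px x"
      have yy: "y \<bullet> y = 1" unfolding y_def rotP_norm xx by simp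
      have q: "nvec y $ 3 = ((cos th)^2 - (sin th)^2) * nvec x $ 3"
        unfolding y_def quadq_rot n12 by simp
      have "((cos th)^2 - (sin th)^2)^2 < 1"
        by (rule t7) (simp_all add: th_def inverse_le_1_iff)
      hence "(nvec y $ 3)^2 < 1" unfolding q power_mult_distrib n3 by simp
      moreover have "(nvec y $1)^2 + (nvec y $ 2)^2 + (nvec y $ 3)^2 = 1" using nvec_sq[of y] yy by simp
      ultimately have "(nvec y $1)^2 + (nvec y $ 2)^2 \<noteq> 0" by linarith
      moreover have "norm y = 1" using yy by (simp add: norm_eq_1)
      ultimately show ?thesis by (simp add: Mset_def y_def th_def)
    qed
    have "\<forall>n. (cos (inverse (real (Suc n))) *\<^sub>R x + sin (inverse (real (Suc n))) *\<^sub>R Px x, l)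
           \<in> {z \<in> Mset. (nvec (fst z) $ 1)^2 + (nvec (fst z) $ 2)^2 \<noteq> 0}" using mem by blast
    moreover have "(\<lambda>n. (cos (inverse (real (Suc n))) *\<^sub>R x + sin (inverse (real (Suc n))) *\<^sub>R Px x, l)) \<longlonglongrightarrow> z"
      using t6 zxl by simp
    ultimately show ?thesis unfolding closure_sequential
      by (intro exI[of _ "\<lambda>n. (cos (inverse (real (Suc n))) *\<^sub>R x + sin (inverse (real (Suc n))) *\<^sub>R Px x, l)"] conjI)
  qed
qed

lemma phi_period: "phi (t + 4*pi) z = phi t z"
proof -
  have e1: "(t + 4*pi)/2 = t/2 + 2*pi" by simp
  have e2: "t + 4*pi = (t + 2*pi) + 2*pi" by simp
  show ?thesis unfolding phi_def e1 unfolding e2 by (simp only: cos_periodic sin_periodic)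
qed

lemma psi_period: "fst z \<bullet> fst z = 1 \<Longrightarrow> psi (t + 4*pi) z = psi t z"
proof -
  assume xx: "fst z \<bullet> fst z = 1"
  have e1: "(t + 4*pi)/2 = t/2 + 2*pi" by simp
  show ?thesis unfolding psi_def xx by (simp only: mult_1 e1 cos_periodic sin_periodic)
qed

theorem theorem1:
  fixes I1 \<delta> :: real and V :: "real \<Rightarrow> real"
  assumes "I1 > 0" and "smooth_real V"
  defines "H \<equiv> Ham I1 \<delta> V"
  shows
    "(\<forall>z. poisson H lz z = 0 \<and> poisson H L3 z = 0 \<and> poisson lz L3 z = 0)
   \<and> (\<forall>z. hvf H z = (1 / (2 * I1)) *\<^sub>R hvf lsq z + (\<delta> * L3 z / I1) *\<^sub>R hvf L3 z
          - (1/2) *\<^sub>R (0, xplus (fst z) *v fst (grad (\<lambda>w. V (quadq (fst w))) z)))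
   \<and> (\<exists>\<phi> \<psi> T1 T2. is_flow (hvf lz) \<phi> \<and> is_flow (hvf L3) \<psi> \<and>
        (\<forall>s t z. \<phi> s (\<psi> t z) = \<psi> t (\<phi> s z)) \<and> T1 > 0 \<and> T2 > 0 \<and>
        (\<forall>t. \<forall>z\<in>Mset. \<phi> (t + T1) z = \<phi> t z \<and> \<psi> (t + T2) z = \<psi> t z))
   \<and> (\<exists>U. openin (top_of_set Mset) U \<and> Mset \<subseteq> closure U \<and>
        (\<forall>z\<in>U. \<forall>a b c. a *\<^sub>R hvf H z + b *\<^sub>R hvf L3 z + c *\<^sub>R hvf lz z = 0
                  \<longrightarrow> a = 0 \<and> b = 0 \<and> c = 0))"
proof -
  have d: "\<And>s. V differentiable (at s)"
  proof -
    fix s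
    have "((deriv ^^ 0) V) differentiable (at s)" using assms(2) unfolding smooth_real_def by blast
    thus "V differentiable (at s)" by simp
  qed
  have I0: "I1 \<noteq> 0" using assms(1) by simp
  have P1: "\<forall>z. poisson H lz z = 0 \<and> poisson H L3 z = 0 \<and> poisson lz L3 z = 0"
    unfolding H_def using pb_H_lz[OF d] pb_H_L3[OF d] pb_lz_L3 by blast
  have P2: "\<forall>z. hvf H z = (1 / (2 * I1)) *\<^sub>R hvf lsq z + (\<delta> * L3 z / I1) *\<^sub>R hvf L3 z
          - (1/2) *\<^sub>R (0, xplus (fst z) *v fst (grad (\<lambda>w. V (quadq (fst w))) z))"
    unfolding H_def using hvf_H[OF d I0] by blast
  have P3: "\<exists>\<phi> \<psi> T1 T2. is_flow (hvf lz) \<phi> \<and> is_flow (hvf L3) \<psi> \<and>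
        (\<forall>s t z. \<phi> s (\<psi> t z) = \<psi> t (\<phi> s z)) \<and> T1 > 0 \<and> T2 > 0 \<and>
        (\<forall>t. \<forall>z\<in>Mset. \<phi> (t + T1) z = \<phi> t z \<and> \<psi> (t + T2) z = \<psi> t z)"
  proof (intro exI conjI)
    show "is_flow (hvf lz) phi" by (rule phi_flow)
    show "is_flow (hvf L3) psi" by (rule psi_flow)
    show "\<forall>s t z. phi s (psi t z) = psi t (phi s z)" using phi_psi_comm by blast
    show "(4*pi::real) > 0" by simp
    show "(4*pi::real) > 0" by simp
    show "\<forall>t. \<forall>z\<in>Mset. phi (t + 4*pi) z = phi t z \<and> psi (t + 4*pi) z = psi t z"
      using phi_period psi_period Mset_xx by blast
  qed
  have P4: "\<exists>U. openin (top_of_set Mset) U \<and> Mset \<subseteq> closure U \<and>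
        (\<forall>z\<in>U. \<forall>a b c. a *\<^sub>R hvf H z + b *\<^sub>R hvf L3 z + c *\<^sub>R hvf lz z = 0
                  \<longrightarrow> a = 0 \<and> b = 0 \<and> c = 0)"
  proof (intro exI conjI)
    show "openin (top_of_set Mset) (Mset \<inter> {z. Dfun z \<noteq> 0})"
      by (rule openin_open_Int[OF open_D])
    have "closure {z \<in> Mset. (nvec (fst z) $ 1)^2 + (nvec (fst z) $ 2)^2 \<noteq> 0} \<subseteq> closure (Mset \<inter> {z. Dfun z \<noteq> 0})"
      using closure_mono[OF M1_closure] by simp
    thus "Mset \<subseteq> closure (Mset \<inter> {z. Dfun z \<noteq> 0})" using M_closure by (rule order_trans[rotated])
    show "\<forall>z\<in>Mset \<inter> {z. Dfun z \<noteq> 0}. \<forall>a b c. a *\<^sub>R hvf H z + b *\<^sub>R hvf L3 z + c *\<^sub>R hvf lz z = 0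
                  \<longrightarrow> a = 0 \<and> b = 0 \<and> c = 0"
      unfolding H_def using indep[OF d assms(1)] by blast
  qed
  show ?thesis using P1 P2 P3 P4 by blast
qed

end
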